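(* Let $G$ be a path-pairable graph on $n$ vertices with diameter $d \geq 20$, and let $x,y$ be vertices with $d(x,y)=d$. For $0\le i\le d$ let $S_i=\{z\in V(G): d(x,z)=i\}$, and define $A=\bigcup_{i=0}^{\lceil d/3\rceil}S_i$ and $C=\bigcup_{i=\lfloor 2d/3\rfloor}^{d}S_i$. Then $|A|\geq \min\left(\frac{n}{2},\frac{d^2}{100}\right)$ and $|C|\geq \min\left(\frac{n}{2},\frac{d^2}{100}\right)$.
   Context: A graph $G$ on $n=2m$ vertices is path-pairable if for every partition of its vertex set into $m$ pairs $\{x_1,y_1\},\dots,\{x_m,y_m\}$ there exist pairwise edge-disjoint paths $P_1,\dots,P_m$ such that $P_i$ joins $x_i$ to $y_i$ for each $i$. $d(u,v)$ denotes the graph distance between vertices $u$ and $v$; the diameter is the maximum distance between two vertices. *)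

theory Defs
  imports Complex_Main
begin

definition simple_graph :: "'a set \<Rightarrow> ('a \<Rightarrow> 'a \<Rightarrow> bool) \<Rightarrow> bool" where
  "simple_graph V E \<longleftrightarrow> finite V \<and> (\<forall>u v. E u v \<longrightarrow> u \<in> V \<and> v \<in> V)
     \<and> (\<forall>u v. E u v \<longrightarrow> E v u) \<and> (\<forall>u. \<not> E u u)"

definition walk :: "'a set \<Rightarrow> ('a \<Rightarrow> 'a \<Rightarrow> bool) \<Rightarrow> 'a list \<Rightarrow> bool" where
  "walk V E xs \<longleftrightarrow> xs \<noteq> [] \<and> set xs \<subseteq> V \<and> (\<forall>i. Suc i < length xs \<longrightarrow> E (xs ! i) (xs ! Suc i))"

definition gpath :: "'a set \<Rightarrow> ('a \<Rightarrow> 'a \<Rightarrow> bool) \<Rightarrow> 'a list \<Rightarrow> bool" where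
  "gpath V E xs \<longleftrightarrow> walk V E xs \<and> distinct xs"

definition path_edges :: "'a list \<Rightarrow> 'a set set" where
  "path_edges xs = {{xs ! i, xs ! Suc i} | i. Suc i < length xs}"

text \<open>Graph distance (number of edges of a shortest walk); only meaningful when connected.\<close>
definition gdist :: "'a set \<Rightarrow> ('a \<Rightarrow> 'a \<Rightarrow> bool) \<Rightarrow> 'a \<Rightarrow> 'a \<Rightarrow> nat" where
  "gdist V E u v = (LEAST k. \<exists>xs. walk V E xs \<and> hd xs = u \<and> last xs = v \<and> length xs = Suc k)"

definition connected_graph :: "'a set \<Rightarrow> ('a \<Rightarrow> 'a \<Rightarrow> bool) \<Rightarrow> bool" where
  "connected_graph V E \<longleftrightarrow> (\<forall>u\<in>V. \<forall>v\<in>V. \<exists>xs. walk V E xs \<and> hd xs = u \<and> last xs = v)"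

definition has_diameter :: "'a set \<Rightarrow> ('a \<Rightarrow> 'a \<Rightarrow> bool) \<Rightarrow> nat \<Rightarrow> bool" where
  "has_diameter V E d \<longleftrightarrow> connected_graph V E \<and> (\<forall>u\<in>V. \<forall>v\<in>V. gdist V E u v \<le> d)
     \<and> (\<exists>u\<in>V. \<exists>v\<in>V. gdist V E u v = d)"

definition pairing :: "'a set \<Rightarrow> 'a set set \<Rightarrow> bool" where
  "pairing V M \<longleftrightarrow> (\<forall>p\<in>M. card p = 2) \<and> (\<forall>p\<in>M. \<forall>q\<in>M. p \<noteq> q \<longrightarrow> p \<inter> q = {}) \<and> \<Union>M = V"

definition path_pairable :: "'a set \<Rightarrow> ('a \<Rightarrow> 'a \<Rightarrow> bool) \<Rightarrow> bool" where
  "path_pairable V E \<longleftrightarrow> even (card V) \<and>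
     (\<forall>M. pairing V M \<longrightarrow>
        (\<exists>P :: 'a set \<Rightarrow> 'a list.
           (\<forall>p\<in>M. gpath V E (P p) \<and> {hd (P p), last (P p)} = p) \<and>
           (\<forall>p\<in>M. \<forall>q\<in>M. p \<noteq> q \<longrightarrow> path_edges (P p) \<inter> path_edges (P q) = {})))"

end

theory Submission
  imports Defs
begin


lemma cross:
  assumes "xs \<noteq> []" "hd xs \<in> U" "last xs \<notin> U"
  shows "\<exists>i. Suc i < length xs \<and> xs ! i \<in> U \<and> xs ! Suc i \<notin> U"
  using assms
proof (induction xs)
  case Nil then show ?case by simp
next
  case (Cons a xs)
  show ?case
  proof (cases "xs = []")
    case True then show ?thesis using Cons by simp
  next
    case False
    show ?thesis
    proof (cases "hd xs \<in> U")
      case True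
      then obtain i where "Suc i < length xs" "xs ! i \<in> U" "xs ! Suc i \<notin> U"
        using Cons False by auto
      then show ?thesis by (intro exI[of _ "Suc i"]) simp
    next
      case f2: False
      then show ?thesis using Cons False
        by (intro exI[of _ 0]) (auto simp: hd_conv_nth)
    qed
  qed
qed

lemma walk_snoc:
  assumes "walk V E xs" "E (last xs) b" "b \<in> V"
  shows "walk V E (xs @ [b])"
  using assms unfolding walk_def
  apply (auto simp: nth_append last_conv_nth less_Suc_eq)
  by (subgoal_tac "i = length xs - Suc 0") auto

lemma gdist_walk:
  assumes "connected_graph V E" "u \<in> V" "v \<in> V"
  shows "\<exists>xs. walk V E xs \<and> hd xs = u \<and> last xs = v \<and> length xs = Suc (gdist V E u v)"
proof -
  obtain xs where xs: "walk V E xs" "hd xs = u" "last xs = v"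
    using assms unfolding connected_graph_def by blast
  then have "length xs = Suc (length xs - 1)" by (cases xs) (auto simp: walk_def)
  then have "\<exists>k. \<exists>xs. walk V E xs \<and> hd xs = u \<and> last xs = v \<and> length xs = Suc k"
    using xs by blast
  then show ?thesis unfolding gdist_def by (rule LeastI_ex)
qed

lemma gdist_le:
  assumes "walk V E xs" "hd xs = u" "last xs = v" "length xs = Suc k"
  shows "gdist V E u v \<le> k"
  unfolding gdist_def using assms by (intro Least_le) blast

lemma gdist_self:
  assumes "u \<in> V" shows "gdist V E u u = 0"
proof -
  have "walk V E [u]" using assms by (simp add: walk_def)
  then have "gdist V E u u \<le> 0" by (intro gdist_le[of V E "[u]"]) auto
  then show ?thesis by simp
qed

lemma gdist_edge:
  assumes "simple_graph V E" "connected_graph V E" "u \<in> V" "E a b"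
  shows "gdist V E u b \<le> gdist V E u a + 1"
proof -
  have ab: "a \<in> V" "b \<in> V" using assms unfolding simple_graph_def by auto
  obtain xs where xs: "walk V E xs" "hd xs = u" "last xs = a" "length xs = Suc (gdist V E u a)"
    using gdist_walk[OF assms(2,3) ab(1)] by blast
  have "walk V E (xs @ [b])" using walk_snoc[OF xs(1)] xs(3) assms(4) ab by simp
  moreover have "hd (xs @ [b]) = u" using xs by (cases xs) (auto simp: walk_def)
  ultimately show ?thesis using xs by (intro gdist_le[of V E "xs @ [b]"]) auto
qed

lemma pair_exists:
  assumes "finite R" "even (card R)"
  shows "\<exists>M. pairing R M"
  using assms
proof (induction "card R" arbitrary: R rule: less_induct)
  case less
  show ?case
  proof (cases "R = {}")
    case True then show ?thesis by (intro exI[of _ "{}"]) (simp add: pairing_def)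
  next
    case False
    then obtain a where a: "a \<in> R" by blast
    have "card R \<noteq> 0" using False less by simp
    then have "card R \<ge> 2" using less by presburger
    then have "card (R - {a}) \<ge> 1" using a less by simp
    then obtain b where b: "b \<in> R - {a}" by (metis card.empty ex_in_conv not_one_le_zero)
    define R' where "R' = R - {a, b}"
    have c2: "card {a,b} = 2" using b by auto
    have cR': "card R' = card R - 2" using a b less c2 unfolding R'_def
      by (subst card_Diff_subset) auto
    have "card R' < card R" "finite R'" "even (card R')" using cR' \<open>card R \<ge> 2\<close> less
      by (auto simp: R'_def)
    then obtain M' where M': "pairing R' M'" using less by blast
    have "pairing R (insert {a,b} M')"
      using M' a b unfolding pairing_def R'_def by (auto simp: card_insert_if)
    then show ?thesis by blast
  qed
qed



lemma cut_lemma: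
  assumes sg: "simple_graph V E" and pp: "path_pairable V E" and WV: "W \<subseteq> V"
    and cW: "2 * card W \<le> card V" and UW: "U \<subseteq> W"
  shows "card U \<le> card {e. \<exists>a b. e = {a,b} \<and> E a b \<and> a \<in> U \<and> b \<notin> U}"
proof -
  have fV: "finite V" using sg by (simp add: simple_graph_def)
  have fW: "finite W" using fV WV finite_subset by blast
  have cVW: "card (V - W) = card V - card W" using fW WV by (simp add: card_Diff_subset)
  then have "card W \<le> card (V - W)" using cW by simp
  then obtain f where f: "f ` W \<subseteq> V - W" "inj_on f W"
    using card_le_inj[of W "V - W"] fV fW by blast
  define R where "R = V - W - f ` W"
  have cfW: "card (f ` W) = card W" using f by (simp add: card_image)
  have cR: "card R = card V - card W - card W"
    unfolding R_def using f fV cVW cfW by (subst card_Diff_subset) (auto intro: finite_subset)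
  have ev: "even (card V)" using pp by (simp add: path_pairable_def)
  have "even (card R)" using cR ev cW by presburger
  then obtain MR where MR: "pairing R MR" using pair_exists[of R] fV R_def by auto
  define M where "M = (\<lambda>w. {w, f w}) ` W \<union> MR"
  have fnot: "\<And>w. w \<in> W \<Longrightarrow> f w \<notin> W \<and> f w \<in> V" using f by auto
  have MRsub: "\<And>p. p \<in> MR \<Longrightarrow> p \<subseteq> R" using MR by (auto simp: pairing_def)
  have "pairing V M"
    unfolding pairing_def
  proof (intro conjI ballI impI)
    fix p assume "p \<in> M"
    then show "card p = 2"
    proof (auto simp: M_def)
      fix w assume "w \<in> W"
      then have "w \<noteq> f w" using fnot[of w] by metis
      then show "card {w, f w} = 2" by simp
    next
      assume "p \<in> MR" then show "card p = 2" using MR by (auto simp: pairing_def)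
    qed
  next
    fix p q assume pq: "p \<in> M" "q \<in> M" "p \<noteq> q"
    show "p \<inter> q = {}"
    proof (cases "p \<in> MR")
      case True
      show ?thesis
      proof (cases "q \<in> MR")
        case True then show ?thesis using \<open>p \<in> MR\<close> MR pq by (auto simp: pairing_def)
      next
        case False
        then obtain w where "w \<in> W" "q = {w, f w}" using pq by (auto simp: M_def)
        then show ?thesis using MRsub[OF \<open>p \<in> MR\<close>] by (auto simp: R_def)
      qed
    next
      case False
      then obtain w where w: "w \<in> W" "p = {w, f w}" using pq by (auto simp: M_def)
      show ?thesis
      proof (cases "q \<in> MR")
        case True then show ?thesis using MRsub[OF True] w by (auto simp: R_def)
      next
        case False
        then obtain w' where w': "w' \<in> W" "q = {w', f w'}" using pq by (auto simp: M_def)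
        have "w \<noteq> w'" using w w' pq by auto
        then have "f w \<noteq> f w'" using f(2) w w' by (auto dest: inj_onD)
        then show ?thesis using w w' fnot[of w] fnot[of w'] \<open>w \<noteq> w'\<close> by auto
      qed
    qed
  next
    have "\<Union>MR = R" using MR by (simp add: pairing_def)
    then show "\<Union>M = V" unfolding M_def R_def using WV fnot by auto
  qed
  then obtain P where P: "\<forall>p\<in>M. gpath V E (P p) \<and> {hd (P p), last (P p)} = p"
    "\<forall>p\<in>M. \<forall>q\<in>M. p \<noteq> q \<longrightarrow> path_edges (P p) \<inter> path_edges (P q) = {}"
    using pp unfolding path_pairable_def by blast
  define cut where "cut = {e. \<exists>a b. e = {a,b} \<and> E a b \<and> a \<in> U \<and> b \<notin> U}"
  have "cut \<subseteq> Pow V" using sg unfolding cut_def simple_graph_def by auto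
  then have fcut: "finite cut" using fV by (meson finite_Pow_iff finite_subset)
  have ex: "\<exists>e. e \<in> path_edges (P {u, f u}) \<and> e \<in> cut" if u: "u \<in> U" for u
  proof -
    have uW: "u \<in> W" using u UW by auto
    have pM: "{u, f u} \<in> M" using uW by (auto simp: M_def)
    define xs where "xs = P {u, f u}"
    have gp: "gpath V E xs" "{hd xs, last xs} = {u, f u}" using P(1) pM xs_def by auto
    have ne: "xs \<noteq> []" and wk: "\<forall>i. Suc i < length xs \<longrightarrow> E (xs ! i) (xs ! Suc i)"
      using gp(1) by (auto simp: gpath_def walk_def)
    have fuU: "f u \<notin> U" using fnot[OF uW] UW by auto
    have "hd xs = u \<and> last xs = f u \<or> hd xs = f u \<and> last xs = u"
      using gp(2) by (auto simp: doubleton_eq_iff)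
    then show ?thesis
    proof
      assume h: "hd xs = u \<and> last xs = f u"
      then obtain i where i: "Suc i < length xs" "xs ! i \<in> U" "xs ! Suc i \<notin> U"
        using cross[OF ne, of U] u fuU by auto
      have "{xs ! i, xs ! Suc i} \<in> path_edges xs" using i unfolding path_edges_def by blast
      moreover have "{xs ! i, xs ! Suc i} \<in> cut" using i wk unfolding cut_def by blast
      ultimately show ?thesis using xs_def by blast
    next
      assume h: "hd xs = f u \<and> last xs = u"
      then obtain i where i: "Suc i < length xs" "xs ! i \<notin> U" "xs ! Suc i \<in> U"
        using cross[OF ne, of "- U"] u fuU by auto
      have "{xs ! i, xs ! Suc i} \<in> path_edges xs" using i unfolding path_edges_def by blast
      moreover have "E (xs ! Suc i) (xs ! i)" using i wk sg unfolding simple_graph_def by blast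
      then have "{xs ! Suc i, xs ! i} \<in> cut" using i unfolding cut_def by blast
      then have "{xs ! i, xs ! Suc i} \<in> cut" by (simp add: insert_commute)
      ultimately show ?thesis using xs_def by blast
    qed
  qed
  define g where "g u = (SOME e. e \<in> path_edges (P {u, f u}) \<and> e \<in> cut)" for u
  have g: "g u \<in> path_edges (P {u, f u}) \<and> g u \<in> cut" if "u \<in> U" for u
    unfolding g_def using someI_ex[OF ex[OF that]] .
  have "inj_on g U"
  proof (rule inj_onI)
    fix u u' assume uu: "u \<in> U" "u' \<in> U" "g u = g u'"
    have pM: "{u, f u} \<in> M" "{u', f u'} \<in> M" using uu UW by (auto simp: M_def)
    have "{u, f u} = {u', f u'}"
    proof (rule ccontr)
      assume ne: "{u, f u} \<noteq> {u', f u'}"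
      have dj: "path_edges (P {u, f u}) \<inter> path_edges (P {u', f u'}) = {}"
        using P(2) pM ne by simp
      have "g u \<in> path_edges (P {u, f u}) \<inter> path_edges (P {u', f u'})"
        using g[OF uu(1)] g[OF uu(2)] uu(3) by simp
      then show False using dj by simp
    qed
    then have "u \<in> {u', f u'}" by (metis insertI1)
    moreover have "u \<noteq> f u'" using fnot[of u'] uu UW by blast
    ultimately show "u = u'" by simp
  qed
  moreover have "g ` U \<subseteq> cut" using g by auto
  ultimately have "card U \<le> card cut" using fcut by (rule card_inj_on_le)
  then show ?thesis unfolding cut_def .
qed



lemma sq4: "4 * ((a::nat) * b) \<le> (a + b)^2"
proof -
  have "0 \<le> (int a - int b)^2" by simp
  moreover have "(int a - int b)^2 = int ((a+b)^2) - int (4 * (a * b))"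
    by (simp add: power2_eq_square algebra_simps)
  ultimately show ?thesis by linarith
qed

lemma grow:
  fixes s :: "nat \<Rightarrow> nat"
  assumes s0: "s 0 \<ge> 1" and h: "\<forall>i<k. (\<Sum>j\<le>i. s j) \<le> s i * s (Suc i)"
  shows "(k div 2)^2 + 1 \<le> (\<Sum>j\<le>k. s j)"
proof -
  have "\<forall>j. 2 * j \<le> k \<longrightarrow> j^2 + 1 \<le> (\<Sum>l\<le>2*j. s l)"
  proof
    fix j show "2 * j \<le> k \<longrightarrow> j^2 + 1 \<le> (\<Sum>l\<le>2*j. s l)"
    proof (induction j)
      case 0 then show ?case using s0 by simp
    next
      case (Suc j)
      show ?case
      proof
        assume k: "2 * Suc j \<le> k"
        define a where "a = s (Suc (2*j))"
        define b where "b = s (Suc (Suc (2*j)))"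
        define T where "T = (\<Sum>l\<le>2*j. s l)"
        have "2 * j \<le> k" using k by simp
        then have IH: "j^2 + 1 \<le> T" using Suc.IH T_def by blast
        have "Suc (2*j) < k" using k by simp
        then have "(\<Sum>l\<le>Suc (2*j). s l) \<le> a * b" using h unfolding a_def b_def by blast
        moreover have "(\<Sum>l\<le>Suc (2*j). s l) = T + a" unfolding T_def a_def by simp
        ultimately have "T \<le> a * b" by linarith
        then have "j^2 + 1 \<le> a * b" using IH by linarith
        then have "4 * (j^2 + 1) \<le> 4 * (a * b)" by simp
        then have "4 * (j^2 + 1) \<le> (a+b)^2" using sq4[of a b] by (rule order_trans)
        moreover have "(2*j)^2 = 4 * j^2" by (simp add: power_mult_distrib)
        then have "(2*j)^2 < 4 * (j^2 + 1)" by simp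
        ultimately have "(2*j)^2 < (a+b)^2" by (rule less_le_trans[rotated])
        then have lt: "2*j < a + b" using power_less_imp_less_base by blast
        have e1: "(\<Sum>l\<le>2*Suc j. s l) = T + a + b" unfolding T_def a_def b_def by simp
        have e2: "(Suc j)^2 = j^2 + 2*j + 1" by (simp add: power2_eq_square)
        show "(Suc j)^2 + 1 \<le> (\<Sum>l\<le>2*Suc j. s l)" unfolding e1 e2 using IH lt by linarith
      qed
    qed
  qed
  then have "(k div 2)^2 + 1 \<le> (\<Sum>l\<le>2*(k div 2). s l)" by simp
  also have "\<dots> \<le> (\<Sum>l\<le>k. s l)" by (intro sum_mono2) auto
  finally show ?thesis .
qed



lemma final_arith:
  fixes d k c :: nat
  assumes "d \<ge> 20" "3 * k \<ge> d" "(k div 2)^2 + 1 \<le> c"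
  shows "real d ^ 2 / 100 \<le> real c"
proof -
  have "k \<le> 2 * (k div 2) + 1" by simp
  then have "d \<le> 10 * (k div 2)" using assms(1,2) by linarith
  then have "d^2 \<le> (10 * (k div 2))^2" by (rule power_mono) simp
  also have "\<dots> = 100 * (k div 2)^2" by (simp add: power_mult_distrib)
  also have "\<dots> \<le> 100 * c" using assms(3) by simp
  finally have "real (d^2) \<le> real (100 * c)" by (simp only: of_nat_le_iff)
  then show ?thesis by simp
qed
lemma ceil3: "3 * nat \<lceil>real d / 3\<rceil> \<ge> d"
  proof -
    have "real d / 3 \<le> of_int \<lceil>real d / 3\<rceil>" by (rule le_of_int_ceiling)
    moreover have "0 \<le> \<lceil>real d / 3\<rceil>" by simp
    ultimately have "real d / 3 \<le> real (nat \<lceil>real d / 3\<rceil>)" by simp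
    then show ?thesis by linarith
  qed
lemma floor3: "3 * nat \<lfloor>2 * real d / 3\<rfloor> \<le> 2 * d"
  proof -
    have "of_int \<lfloor>2 * real d / 3\<rfloor> \<le> 2 * real d / 3" by (rule of_int_floor_le)
    moreover have "0 \<le> \<lfloor>2 * real d / 3\<rfloor>" by simp
    ultimately have "real (nat \<lfloor>2 * real d / 3\<rfloor>) \<le> 2 * real d / 3" by simp
    then show ?thesis by linarith
  qed
theorem lemma2:
  fixes V :: "'a set" and E :: "'a \<Rightarrow> 'a \<Rightarrow> bool" and d :: nat and x y :: 'a
  assumes "simple_graph V E"
    and "path_pairable V E"
    and "has_diameter V E d"
    and "d \<ge> 20"
    and "x \<in> V" and "y \<in> V" and "gdist V E x y = d"
  defines "S \<equiv> (\<lambda>i. {z \<in> V. gdist V E x z = i})"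
  defines "A \<equiv> (\<Union>i\<in>{0..nat \<lceil>real d / 3\<rceil>}. S i)"
  defines "C \<equiv> (\<Union>i\<in>{nat \<lfloor>2 * real d / 3\<rfloor>..d}. S i)"
  shows "real (card A) \<ge> min (real (card V) / 2) (real d ^ 2 / 100) \<and>
         real (card C) \<ge> min (real (card V) / 2) (real d ^ 2 / 100)"
proof -
  note sg = assms(1) and pp = assms(2)
  define D where "D z = gdist V E x z" for z
  have conn: "connected_graph V E" and dle: "\<And>z. z \<in> V \<Longrightarrow> D z \<le> d"
    using assms(3,5) unfolding has_diameter_def D_def by auto
  have fV: "finite V" using sg by (simp add: simple_graph_def)
  have edge: "D b \<le> D a + 1 \<and> D a \<le> D b + 1 \<and> a \<in> V \<and> b \<in> V" if "E a b" for a b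
  proof -
    have "E b a" using that sg by (simp add: simple_graph_def)
    then show ?thesis using gdist_edge[OF sg conn assms(5)] that sg
      unfolding D_def simple_graph_def by blast
  qed
  have Sd: "S i = {z\<in>V. D z = i}" for i by (simp add: S_def D_def)
  define s where "s i = card (S i)" for i
  have finS: "finite (S i)" for i using fV by (simp add: Sd)
  have cut_low: "card {{a, b} |a b. E a b \<and> a \<in> {z\<in>V. D z \<le> i} \<and> b \<notin> {z\<in>V. D z \<le> i}}
      \<le> s i * s (Suc i)" for i
  proof -
    have "{{a, b} |a b. E a b \<and> a \<in> {z\<in>V. D z \<le> i} \<and> b \<notin> {z\<in>V. D z \<le> i}}
        \<subseteq> (\<lambda>(a,b). {a,b}) ` (S i \<times> S (Suc i))"
    proof
      fix e assume "e \<in> {{a, b} |a b. E a b \<and> a \<in> {z\<in>V. D z \<le> i} \<and> b \<notin> {z\<in>V. D z \<le> i}}"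
      then obtain a b where ab: "e = {a,b}" "E a b" "a \<in> V" "D a \<le> i" "b \<notin> {z\<in>V. D z \<le> i}"
        by blast
      have "D a = i" "D b = Suc i" "b \<in> V" using edge[OF ab(2)] ab by auto
      then show "e \<in> (\<lambda>(a,b). {a,b}) ` (S i \<times> S (Suc i))" using ab by (auto simp: Sd)
    qed
    then have "card {{a, b} |a b. E a b \<and> a \<in> {z\<in>V. D z \<le> i} \<and> b \<notin> {z\<in>V. D z \<le> i}}
        \<le> card ((\<lambda>(a,b). {a,b}) ` (S i \<times> S (Suc i)))"
      using finS by (intro card_mono) auto
    also have "\<dots> \<le> card (S i \<times> S (Suc i))" by (rule card_image_le) (simp add: finS)
    finally show ?thesis by (simp add: s_def card_cartesian_product)
  qed
  have cut_high: "card {{a, b} |a b. E a b \<and> a \<in> {z\<in>V. i \<le> D z} \<and> b \<notin> {z\<in>V. i \<le> D z}}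
      \<le> s (i - 1) * s i" if i1: "1 \<le> i" for i
  proof -
    have "{{a, b} |a b. E a b \<and> a \<in> {z\<in>V. i \<le> D z} \<and> b \<notin> {z\<in>V. i \<le> D z}}
        \<subseteq> (\<lambda>(a,b). {a,b}) ` (S i \<times> S (i - 1))"
    proof
      fix e assume "e \<in> {{a, b} |a b. E a b \<and> a \<in> {z\<in>V. i \<le> D z} \<and> b \<notin> {z\<in>V. i \<le> D z}}"
      then obtain a b where ab: "e = {a,b}" "E a b" "a \<in> V" "i \<le> D a" "b \<notin> {z\<in>V. i \<le> D z}"
        by blast
      have "D a = i" "D b = i - 1" "b \<in> V" using edge[OF ab(2)] ab i1 by auto
      then show "e \<in> (\<lambda>(a,b). {a,b}) ` (S i \<times> S (i - 1))" using ab by (auto simp: Sd)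
    qed
    then have "card {{a, b} |a b. E a b \<and> a \<in> {z\<in>V. i \<le> D z} \<and> b \<notin> {z\<in>V. i \<le> D z}}
        \<le> card ((\<lambda>(a,b). {a,b}) ` (S i \<times> S (i - 1)))"
      using finS by (intro card_mono) auto
    also have "\<dots> \<le> card (S i \<times> S (i - 1))" by (rule card_image_le) (simp add: finS)
    finally show ?thesis by (simp add: s_def card_cartesian_product mult.commute)
  qed
  have card_low: "card {z\<in>V. D z \<le> i} = (\<Sum>j\<le>i. s j)" for i
  proof -
    have "{z\<in>V. D z \<le> i} = (\<Union>j\<in>{..i}. S j)" by (auto simp: Sd)
    moreover have "card (\<Union>j\<in>{..i}. S j) = (\<Sum>j\<le>i. card (S j))"
      by (rule card_UN_disjoint) (auto simp: fV Sd)
    ultimately show ?thesis by (simp add: s_def)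
  qed
  have card_high: "card {z\<in>V. d - j \<le> D z} = (\<Sum>l\<le>j. s (d - l))" if jd: "j \<le> d" for j
  proof -
    have "{z\<in>V. d - j \<le> D z} = (\<Union>l\<in>{..j}. S (d - l))"
    proof
      show "{z\<in>V. d - j \<le> D z} \<subseteq> (\<Union>l\<in>{..j}. S (d - l))"
      proof
        fix z assume z: "z \<in> {z\<in>V. d - j \<le> D z}"
        then have "D z \<le> d" using dle by auto
        then have "d - (d - D z) = D z" "d - D z \<le> j" using z by auto
        then show "z \<in> (\<Union>l\<in>{..j}. S (d - l))" using z unfolding Sd
          by (intro UN_I[of "d - D z"]) auto
      qed
    next
      show "(\<Union>l\<in>{..j}. S (d - l)) \<subseteq> {z\<in>V. d - j \<le> D z}" by (auto simp: Sd)
    qed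
    moreover have "card (\<Union>l\<in>{..j}. S (d - l)) = (\<Sum>l\<le>j. card (S (d - l)))"
      by (rule card_UN_disjoint) (use jd in \<open>auto simp: fV Sd\<close>)
    ultimately show ?thesis by (simp add: s_def)
  qed
  have sx: "s 0 \<ge> 1"
  proof -
    have "x \<in> S 0" using assms(5) gdist_self[OF assms(5)] by (simp add: S_def)
    then show ?thesis unfolding s_def using finS
      by (metis One_nat_def Suc_leI card_gt_0_iff empty_iff)
  qed
  have sy: "s d \<ge> 1"
  proof -
    have "y \<in> S d" using assms(6,7) by (simp add: S_def)
    then show ?thesis unfolding s_def using finS
      by (metis One_nat_def Suc_leI card_gt_0_iff empty_iff)
  qed
  have AV: "A \<subseteq> V" "C \<subseteq> V" by (auto simp: A_def C_def S_def)
  define k where "k = nat \<lceil>real d / 3\<rceil>"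
  have k3: "3 * k \<ge> d" unfolding k_def by (rule ceil3)
  have Aeq: "A = {z\<in>V. D z \<le> k}" unfolding A_def k_def[symmetric] by (auto simp: Sd)
  have partA: "real (card A) \<ge> min (real (card V) / 2) (real d ^ 2 / 100)"
  proof (cases "2 * card A \<le> card V")
    case True
    have "\<forall>i<k. (\<Sum>j\<le>i. s j) \<le> s i * s (Suc i)"
    proof (intro allI impI)
      fix i assume "i < k"
      then have "{z\<in>V. D z \<le> i} \<subseteq> A" by (auto simp: Aeq)
      then have "card {z\<in>V. D z \<le> i}
          \<le> card {{a, b} |a b. E a b \<and> a \<in> {z\<in>V. D z \<le> i} \<and> b \<notin> {z\<in>V. D z \<le> i}}"
        by (rule cut_lemma[OF sg pp AV(1) True])
      then show "(\<Sum>j\<le>i. s j) \<le> s i * s (Suc i)" using cut_low[of i] card_low[of i] by linarith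
    qed
    then have "(k div 2)^2 + 1 \<le> (\<Sum>j\<le>k. s j)" by (rule grow[of s, OF sx])
    then have "(k div 2)^2 + 1 \<le> card A" using card_low[of k] Aeq by simp
    then have "real d ^ 2 / 100 \<le> real (card A)" by (rule final_arith[OF assms(4) k3])
    then show ?thesis by linarith
  next
    case False then show ?thesis by linarith
  qed
  define m where "m = nat \<lfloor>2 * real d / 3\<rfloor>"
  have m3: "3 * m \<le> 2 * d" unfolding m_def by (rule floor3)
  define K where "K = d - m"
  have K3: "3 * K \<ge> d" using m3 by (simp add: K_def)
  have Ceq: "C = {z\<in>V. d - K \<le> D z}"
  proof -
    have "d - K = m" using m3 by (simp add: K_def)
    then show ?thesis using dle unfolding C_def m_def[symmetric] by (auto simp: Sd)
  qed
  define r where "r l = s (d - l)" for l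
  have partC: "real (card C) \<ge> min (real (card V) / 2) (real d ^ 2 / 100)"
  proof (cases "2 * card C \<le> card V")
    case True
    have "\<forall>i<K. (\<Sum>l\<le>i. r l) \<le> r i * r (Suc i)"
    proof (intro allI impI)
      fix i assume iK: "i < K"
      then have id: "i \<le> d" by (simp add: K_def)
      have "{z\<in>V. d - i \<le> D z} \<subseteq> C" using iK by (auto simp: Ceq)
      then have "card {z\<in>V. d - i \<le> D z}
          \<le> card {{a, b} |a b. E a b \<and> a \<in> {z\<in>V. d - i \<le> D z} \<and> b \<notin> {z\<in>V. d - i \<le> D z}}"
        by (rule cut_lemma[OF sg pp AV(2) True])
      moreover have "1 \<le> d - i" using iK by (simp add: K_def)
      moreover have "d - i - 1 = d - Suc i" by simp
      ultimately show "(\<Sum>l\<le>i. r l) \<le> r i * r (Suc i)"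
        using cut_high[of "d - i"] card_high[OF id] unfolding r_def
        by (simp add: mult.commute)
    qed
    moreover have "r 0 \<ge> 1" using sy by (simp add: r_def)
    ultimately have "(K div 2)^2 + 1 \<le> (\<Sum>l\<le>K. r l)" using grow by blast
    then have "(K div 2)^2 + 1 \<le> card C" using card_high[of K] Ceq by (simp add: K_def r_def)
    then have "real d ^ 2 / 100 \<le> real (card C)" by (rule final_arith[OF assms(4) K3])
    then show ?thesis by linarith
  next
    case False then show ?thesis by linarith
  qed
  show ?thesis using partA partC by blast
qed

end
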